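(* Let $\mathcal C$ be a real polynomial curve with proper real polynomial parametrization $(x(t),y(t))$. If $r=\deg_t x(t)$ and $s=\deg_t y(t)$ are both odd and $r\ne s$, then $\mathcal C$ does not have mirror symmetry.
   Context: A real polynomial curve is $\mathcal C=\{(x(t),y(t)):t\in\mathbb R\}$ with $x,y\in\mathbb R[t]$ not both constant; the parametrization is proper if it is injective for almost all $t$. $\mathcal C$ has mirror symmetry if there is a line such that the reflection in it maps $\mathcal C$ onto itself. *)

theory Defs
  imports Main "HOL-Computational_Algebra.Polynomial"
begin

definition poly_curve :: "real poly \<Rightarrow> real poly \<Rightarrow> (real \<times> real) set" where
  "poly_curve x y = (\<lambda>t. (poly x t, poly y t)) ` UNIV"

definition proper_param :: "real poly \<Rightarrow> real poly \<Rightarrow> bool" where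
  "proper_param x y \<longleftrightarrow>
     finite {t::real. \<exists>u. u \<noteq> t \<and> poly x u = poly x t \<and> poly y u = poly y t}"

definition reflect_line :: "real \<times> real \<Rightarrow> real \<times> real \<Rightarrow> real \<times> real \<Rightarrow> real \<times> real" where
  "reflect_line p d z =
     (let l = ((fst z - fst p) * fst d + (snd z - snd p) * snd d) / ((fst d)\<^sup>2 + (snd d)\<^sup>2)
      in (2 * (fst p + l * fst d) - fst z, 2 * (snd p + l * snd d) - snd z))"

definition mirror_symmetric :: "(real \<times> real) set \<Rightarrow> bool" where
  "mirror_symmetric C \<longleftrightarrow> (\<exists>p d. d \<noteq> (0, 0) \<and> reflect_line p d ` C = C)"

end

theory Submission
  imports Defs
begin

lemma poly_bound_Icc:
  fixes p :: "real poly"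
  shows "\<exists>B. \<forall>u. \<bar>u\<bar> \<le> R \<longrightarrow> \<bar>poly p u\<bar> \<le> B"
proof (cases "0 \<le> R")
  case True
  have "\<exists>M. \<forall>x. -R \<le> x \<and> x \<le> R \<longrightarrow> \<bar>poly p x\<bar> \<le> M"
    by (rule isCont_bounded) (use True in \<open>auto intro!: continuous_intros\<close>)
  then show ?thesis by (metis abs_le_iff minus_le_iff)
next
  case False
  then show ?thesis by auto
qed

lemma odd_poly_signs:
  fixes p :: "real poly"
  assumes "odd (degree p)"
  shows "eventually (\<lambda>t. lead_coeff p * poly p t > 0) at_top"
    and "eventually (\<lambda>t. lead_coeff p * poly p t < 0) at_bot"
proof -
  define n where "n = degree p"
  define c where "c = lead_coeff p"
  have "p \<noteq> 0" using assms by (metis degree_0 odd_pos less_irrefl)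
  hence c0: "c \<noteq> 0" by (simp add: c_def)
  have lim: "((\<lambda>x. c * (poly p x / x^n)) \<longlongrightarrow> c * c) at_infinity"
    unfolding n_def c_def by (intro tendsto_mult tendsto_const poly_divide_tendsto_aux)
  have pos: "c * c > 0" using c0 by (cases "c > 0") (auto simp: mult_neg_neg)
  have ev: "eventually (\<lambda>x. c * (poly p x / x^n) > 0) at_infinity"
    using order_tendstoD(1)[OF lim pos] .
  have ev1: "eventually (\<lambda>x. c * (poly p x / x^n) > 0) at_top"
    using ev filter_leD[OF at_top_le_at_infinity] by blast
  have ev2: "eventually (\<lambda>x. c * (poly p x / x^n) > 0) at_bot"
    using ev filter_leD[OF at_bot_le_at_infinity] by blast
  show "eventually (\<lambda>t. lead_coeff p * poly p t > 0) at_top"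
    using eventually_conj[OF ev1 eventually_gt_at_top[of 0]]
  proof (rule eventually_mono)
    fix x :: real assume h: "0 < c * (poly p x / x ^ n) \<and> 0 < x"
    hence xn: "x^n > 0" by simp
    have "c * poly p x = c * (poly p x / x ^ n) * x^n" using h by (simp add: field_simps)
    also have "\<dots> > 0" by (rule mult_pos_pos) (use h xn in auto)
    finally show "lead_coeff p * poly p x > 0" by (simp add: c_def)
  qed
  show "eventually (\<lambda>t. lead_coeff p * poly p t < 0) at_bot"
    using eventually_conj[OF ev2 eventually_gt_at_bot[of 0]]
  proof (rule eventually_mono)
    fix x :: real assume h: "0 < c * (poly p x / x ^ n) \<and> x < 0"
    hence xn: "x^n < 0" using assms n_def by simp
    have "c * poly p x = c * (poly p x / x ^ n) * x^n" using h by (simp add: field_simps)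
    also have "\<dots> < 0" by (rule mult_pos_neg) (use h xn in auto)
    finally show "lead_coeff p * poly p x < 0" by (simp add: c_def)
  qed
qed

lemma poly_big:
  fixes p :: "real poly"
  assumes "degree p > 0"
  shows "eventually (\<lambda>t. \<bar>poly p t\<bar> > M) at_infinity"
proof -
  have "filterlim (poly p) at_infinity at_infinity"
    using filterlim_poly_at_infinity[OF assms] .
  hence "eventually (\<lambda>t. \<bar>M\<bar> + 1 \<le> norm (poly p t)) at_infinity"
    by (subst (asm) filterlim_at_infinity[of 0]) auto
  thus ?thesis by (rule eventually_mono) auto
qed

lemma main_lemma:
  fixes p q :: "real poly"
  assumes op: "odd (degree p)" and oq: "odd (degree q)"
    and H: "\<forall>t. \<exists>u. poly p u = poly p t + c1 \<and> poly q u = - poly q t + c2"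
  shows False
proof -
  define a where "a = lead_coeff p"
  define b where "b = lead_coeff q"
  have dp: "degree p > 0" and dq: "degree q > 0" using op oq odd_pos by auto
  have "p \<noteq> 0" "q \<noteq> 0" using dp dq by auto
  hence a0: "a \<noteq> 0" and b0: "b \<noteq> 0" by (auto simp: a_def b_def)
  have "eventually (\<lambda>u. a * poly p u < 0 \<and> \<bar>poly p u\<bar> > \<bar>c1\<bar>) at_bot"
    using odd_poly_signs(2)[OF op] filter_leD[OF at_bot_le_at_infinity poly_big[OF dp]]
    unfolding a_def by (rule eventually_conj)
  then obtain R2 where R2: "\<And>u. u \<le> R2 \<Longrightarrow> a * poly p u < 0 \<and> \<bar>poly p u\<bar> > \<bar>c1\<bar>"
    by (auto simp: eventually_at_bot_linorder)
  obtain R1 where R1: "\<And>u. u \<ge> R1 \<Longrightarrow> b * poly q u > 0"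
    using odd_poly_signs(1)[OF oq] unfolding b_def eventually_at_top_linorder by blast
  obtain B where B: "\<And>u. \<bar>u\<bar> \<le> \<bar>R1\<bar> + \<bar>R2\<bar> \<Longrightarrow> \<bar>poly q u\<bar> \<le> B"
    using poly_bound_Icc by blast
  have "eventually (\<lambda>t. a * poly p t > 0 \<and> b * poly q t > 0 \<and> \<bar>poly q t\<bar> > B + \<bar>c2\<bar>) at_top"
    using odd_poly_signs(1)[OF op] odd_poly_signs(1)[OF oq]
      filter_leD[OF at_top_le_at_infinity poly_big[OF dq]]
    unfolding a_def b_def by (intro eventually_conj)
  then obtain t where t: "a * poly p t > 0" "b * poly q t > 0" "\<bar>poly q t\<bar> > B + \<bar>c2\<bar>"
    by (auto simp: eventually_at_top_linorder)
  obtain u where u: "poly p u = poly p t + c1" "poly q u = - poly q t + c2" using H by blast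
  have B0: "B \<ge> 0" using B[of 0] by force
  have "\<bar>poly q u\<bar> > B" using u(2) t(3) by linarith
  hence "\<not> \<bar>u\<bar> \<le> \<bar>R1\<bar> + \<bar>R2\<bar>" using B by force
  hence "u \<ge> R1 \<or> u \<le> R2" by linarith
  then show False
  proof
    assume "u \<ge> R1"
    hence "b * poly q u > 0" by (rule R1)
    moreover have "b * poly q t > b * c2"
    proof -
      have tc: "\<bar>c2\<bar> < \<bar>poly q t\<bar>" using t(3) B0 by linarith
      have "b * c2 \<le> \<bar>b\<bar> * \<bar>c2\<bar>" by (metis abs_ge_self abs_mult)
      also have "\<dots> < \<bar>b\<bar> * \<bar>poly q t\<bar>" using tc b0
        by (intro mult_strict_left_mono) auto
      also have "\<dots> = b * poly q t" using t(2) by (metis abs_mult abs_of_pos)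
      finally show ?thesis .
    qed
    ultimately show False using u(2) by (simp add: algebra_simps)
  next
    assume "u \<le> R2"
    hence h: "a * poly p u < 0" "\<bar>poly p u\<bar> > \<bar>c1\<bar>" using R2 by auto
    have "a * poly p u < a * c1"
    proof -
      have "a * poly p u = - (\<bar>a\<bar> * \<bar>poly p u\<bar>)" using h(1) by (metis abs_mult abs_of_neg minus_minus)
      also have "\<dots> < - (\<bar>a\<bar> * \<bar>c1\<bar>)" using h(2) a0 by simp
      also have "\<dots> \<le> a * c1" by (metis abs_mult abs_ge_minus_self minus_le_iff)
      finally show ?thesis .
    qed
    hence "a * poly p t < 0" using u(1) by (simp add: algebra_simps)
    thus False using t(1) by simp
  qed
qed

lemma odd_degree_comb:
  fixes x y :: "real poly"
  assumes "odd (degree x)" "odd (degree y)" "degree x \<noteq> degree y" "(a, b) \<noteq> (0, 0)"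
  shows "odd (degree (smult a x + smult b y))"
proof (cases "a = 0")
  case True
  then show ?thesis using assms by simp
next
  case a: False
  show ?thesis
  proof (cases "b = 0")
    case True then show ?thesis using assms a by simp
  next
    case False
    show ?thesis
    proof (cases "degree x < degree y")
      case True
      then show ?thesis using assms a False by (subst degree_add_eq_right) auto
    next
      case f2: False
      then show ?thesis using assms a False by (subst degree_add_eq_left) auto
    qed
  qed
qed

theorem corollary17:
  fixes x y :: "real poly"
  assumes "degree x \<noteq> 0 \<or> degree y \<noteq> 0"
    and "proper_param x y"
    and "odd (degree x)" and "odd (degree y)"
    and "degree x \<noteq> degree y"
  shows "\<not> mirror_symmetric (poly_curve x y)"
proof
  assume "mirror_symmetric (poly_curve x y)"
  then obtain p d where d: "d \<noteq> (0, 0)" and R: "reflect_line p d ` poly_curve x y = poly_curve x y"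
    unfolding mirror_symmetric_def by blast
  obtain p1 p2 where pp: "p = (p1, p2)" by (cases p)
  obtain d1 d2 where dd: "d = (d1, d2)" by (cases d)
  have N: "d1\<^sup>2 + d2\<^sup>2 \<noteq> 0" using d dd by simp
  define f where "f = smult d1 x + smult d2 y"
  define g where "g = smult (- d2) x + smult d1 y"
  have H: "\<forall>t. \<exists>u. poly f u = poly f t + 0 \<and> poly g u = - poly g t + (2 * d1 * p2 - 2 * d2 * p1)"
  proof
    fix t
    have "reflect_line p d (poly x t, poly y t) \<in> poly_curve x y"
      using R unfolding poly_curve_def by blast
    then obtain u where u: "(poly x u, poly y u) = reflect_line p d (poly x t, poly y t)"
      unfolding poly_curve_def by auto
    define l where "l = ((poly x t - p1) * d1 + (poly y t - p2) * d2) / (d1\<^sup>2 + d2\<^sup>2)"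
    have ux: "poly x u = 2 * (p1 + l * d1) - poly x t"
      and uy: "poly y u = 2 * (p2 + l * d2) - poly y t"
      using u unfolding reflect_line_def pp dd l_def by (simp_all add: Let_def)
    have lN: "l * (d1\<^sup>2 + d2\<^sup>2) = (poly x t - p1) * d1 + (poly y t - p2) * d2"
      unfolding l_def using N by simp
    have "poly f u = poly f t"
    proof -
      have "poly f u = d1 * (2 * (p1 + l * d1) - poly x t) + d2 * (2 * (p2 + l * d2) - poly y t)"
        unfolding f_def using ux uy by simp
      also have "\<dots> = 2 * d1 * p1 + 2 * d2 * p2 + 2 * (l * (d1\<^sup>2 + d2\<^sup>2)) - d1 * poly x t - d2 * poly y t"
        by (simp add: algebra_simps power2_eq_square)
      also have "\<dots> = poly f t" unfolding lN f_def by (simp add: algebra_simps)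
      finally show ?thesis .
    qed
    moreover have "poly g u = - poly g t + (2 * d1 * p2 - 2 * d2 * p1)"
    proof -
      have "poly g u = - d2 * (2 * (p1 + l * d1) - poly x t) + d1 * (2 * (p2 + l * d2) - poly y t)"
        unfolding g_def using ux uy by simp
      also have "\<dots> = - poly g t + (2 * d1 * p2 - 2 * d2 * p1)"
        unfolding g_def by (simp add: algebra_simps)
      finally show ?thesis .
    qed
    ultimately show "\<exists>u. poly f u = poly f t + 0 \<and> poly g u = - poly g t + (2 * d1 * p2 - 2 * d2 * p1)"
      by auto
  qed
  have of: "odd (degree f)" unfolding f_def
    using odd_degree_comb[OF assms(3,4,5)] d dd by simp
  have og: "odd (degree g)" unfolding g_def
    using odd_degree_comb[OF assms(3,4,5), of "-d2" d1] d dd by auto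
  show False using main_lemma[OF of og H] .
qed

end
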